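(* Let $(X,\Sigma,\tau,(\chi_A)_{A\in AP})$ be a labelled Markov process viewed as a Feller-Dynkin process on $E=X\times[0,1)$. If $R$ is a bisimulation on $E$, then its time-coherent closure $time(R)$ is also a bisimulation.
   Context: A labelled Markov process (LMP) $(X,\Sigma,\tau,(\chi_A)_{A\in AP})$ consists of a measurable space $(X,\Sigma)$, a Markov kernel $\tau:X\times\Sigma\to[0,1]$ (measurable in the first argument, a subprobability measure in the second), and characteristic functions $\chi_A$ of subsets of $X$ for atomic propositions $A\in AP=\{A_1,A_2,\dots\}$. The LMP is viewed as a process on $E=X\times[0,1)$ with $\sigma$-algebra $\Sigma\otimes\mathcal{B}([0,1))$ via kernels $P_t((x,s),C)=\tau_{\lfloor t+s\rfloor}(x,C')$, $C'=\{z:(z,t+s-\lfloor t+s\rfloor)\in C\}$, $\tau_0(x,C)=\delta_C(x)$, $\tau_1=\tau$, $\tau_{k+1}(x,C)=\int_X\tau(x,dy)\tau_k(y,C)$; observation $obs(x,s)$ has $i$-th component $\chi_{A_i}(x)$. With $E_\partial=E\uplus\{\partial\}$, trajectories are cadlag maps $\omega:[0,\infty)\to E_\partial$ with $\partial$ absorbing, $\Omega$ is the set of trajectories, $\mathcal{G}=\sigma(\omega\mapsto\omega(s):s\ge0)$, and $\mathbb{P}^z$ is determined by $\mathbb{P}^z(\omega(0)\in dx_0,\omega(t_1)\in dx_1,\dots,\omega(t_n)\in dx_n)=\delta_z(dx_0)P^{+\partial}_{t_1}(x_0,dx_1)\cdots P^{+\partial}_{t_n-t_{n-1}}(x_{n-1},dx_n)$,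 where $P^{+\partial}_t(z,\{\partial\})=1-P_t(z,E)$, $P^{+\partial}_t(\partial,\{\partial\})=1$; $obs(\partial)=\partial$. An equivalence $R$ on $E$ is a bisimulation if whenever $z\,R\,w$: $obs(z)=obs(w)$, and $\mathbb{P}^z(B)=\mathbb{P}^w(B)$ for every $R$-closed $B\in\mathcal{G}$, where $B$ is $R$-closed if $\omega\in B$ and $\omega(t)\,R\,\omega'(t)$ for all $t\ge0$ ($\partial$ related to itself) imply $\omega'\in B$. An equivalence $R$ on $E$ is time-coherent if for all $x,y\in X$ and $0\le t<1$, $(x,t)\,R\,(y,t)$ implies $(x,s)\,R\,(y,s)$ for all $s\in[0,1)$. The time-coherent closure $time(R)$ of an equivalence $R$ on $E$ is the smallest time-coherent equivalence containing $R$. *)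

theory Defs
  imports "HOL-Probability.Probability"
begin

text \<open>The LMP: a measurable space M (carrier X = space M, sigma-algebra sets M),
  a Markov kernel tau : X \<rightarrow> subprobability measures on M, and labels chi i (i-th
  atomic proposition A_i, characteristic function of a subset of X).\<close>

definition lmp :: "'x measure \<Rightarrow> ('x \<Rightarrow> 'x measure) \<Rightarrow> bool" where
  "lmp M \<tau> \<longleftrightarrow> \<tau> \<in> M \<rightarrow>\<^sub>M subprob_algebra M"

primrec tauk :: "'x measure \<Rightarrow> ('x \<Rightarrow> 'x measure) \<Rightarrow> nat \<Rightarrow> 'x \<Rightarrow> 'x measure" where
  "tauk M \<tau> 0 x = return M x"
| "tauk M \<tau> (Suc k) x = bind (\<tau> x) (\<lambda>y. tauk M \<tau> k y)"

definition Emeas :: "'x measure \<Rightarrow> ('x \<times> real) measure" where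
  "Emeas M = M \<Otimes>\<^sub>M restrict_space borel {0..<1::real}"

text \<open>E_partial = E plus a cemetery point; the cemetery is None.\<close>
definition Ed :: "'x measure \<Rightarrow> ('x \<times> real) option measure" where
  "Ed M = sigma (insert None (Some ` space (Emeas M)))
                ({Some ` A | A. A \<in> sets (Emeas M)} \<union> {{None}})"

definition Pd :: "'x measure \<Rightarrow> ('x \<Rightarrow> 'x measure) \<Rightarrow> real \<Rightarrow> ('x \<times> real) option
                   \<Rightarrow> ('x \<times> real) option measure" where
  "Pd M \<tau> t w = (case w of
      None \<Rightarrow> return (Ed M) None
    | Some (x, s) \<Rightarrow>
        measure_of (space (Ed M)) (sets (Ed M))
          (\<lambda>C. emeasure (tauk M \<tau> (nat \<lfloor>t + s\<rfloor>) x) {y \<in> space M. Some (y, frac (t + s)) \<in> C}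
               + (1 - emeasure (tauk M \<tau> (nat \<lfloor>t + s\<rfloor>) x) (space M)) * indicator C None))"

fun fdd :: "'x measure \<Rightarrow> ('x \<Rightarrow> 'x measure) \<Rightarrow> ('x \<times> real) option \<Rightarrow> real
              \<Rightarrow> (real \<times> ('x \<times> real) option set) list \<Rightarrow> ennreal" where
  "fdd M \<tau> w t0 [] = 1"
| "fdd M \<tau> w t0 ((t, A) # rest) =
     (\<integral>\<^sup>+ y. indicator A y * fdd M \<tau> y t rest \<partial>(Pd M \<tau> (t - t0) w))"

text \<open>Topology: X discrete, [0,1) Euclidean, E_partial the one-point (Alexandroff)
  compactification of E with the cemetery as point at infinity.\<close>
definition topE :: "'x measure \<Rightarrow> ('x \<times> real) topology" where
  "topE M = prod_topology (discrete_topology (space M)) (top_of_set {0..<1::real})"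

definition topEd :: "'x measure \<Rightarrow> ('x \<times> real) option topology" where
  "topEd M = topology (\<lambda>V. V \<subseteq> insert None (Some ` topspace (topE M))
       \<and> openin (topE M) (Some -` V)
       \<and> (None \<in> V \<longrightarrow> compactin (topE M) (topspace (topE M) - Some -` V)))"

definition cadlag :: "'a topology \<Rightarrow> (real \<Rightarrow> 'a) \<Rightarrow> bool" where
  "cadlag T \<omega> \<longleftrightarrow> (\<forall>t\<ge>0. limitin T \<omega> (\<omega> t) (at_right t))
                 \<and> (\<forall>t>0. \<exists>l. limitin T \<omega> l (at_left t))"

text \<open>Trajectories: cadlag maps [0,infinity) \<rightarrow> E_partial with the cemetery absorbing;
  they are extended by the cemetery to negative times (a normalisation only).\<close>
definition Traj :: "'x measure \<Rightarrow> (real \<Rightarrow> ('x \<times> real) option) set" where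
  "Traj M = {\<omega>. (\<forall>t\<ge>0. \<omega> t \<in> insert None (Some ` space (Emeas M)))
               \<and> (\<forall>t<0. \<omega> t = None)
               \<and> (\<forall>t\<ge>0. \<omega> t = None \<longrightarrow> (\<forall>t'\<ge>t. \<omega> t' = None))
               \<and> cadlag (topEd M) \<omega>}"

definition Gm :: "'x measure \<Rightarrow> (real \<Rightarrow> ('x \<times> real) option) measure" where
  "Gm M = sigma (Traj M) {{\<omega> \<in> Traj M. \<omega> s \<in> A} | s A. 0 \<le> s \<and> A \<in> sets (Ed M)}"

definition trajectory_laws :: "'x measure \<Rightarrow> ('x \<Rightarrow> 'x measure)
      \<Rightarrow> ('x \<times> real \<Rightarrow> (real \<Rightarrow> ('x \<times> real) option) measure) \<Rightarrow> bool" where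
  "trajectory_laws M \<tau> PP \<longleftrightarrow> (\<forall>z \<in> space (Emeas M).
      sets (PP z) = sets (Gm M)
    \<and> (\<forall>xs. sorted (map fst xs) \<and> (\<forall>(t, A) \<in> set xs. 0 \<le> t \<and> A \<in> sets (Ed M)) \<longrightarrow>
         emeasure (PP z) {\<omega> \<in> Traj M. \<forall>(t, A) \<in> set xs. \<omega> t \<in> A} = fdd M \<tau> (Some z) 0 xs))"

definition lmp_obs :: "(nat \<Rightarrow> 'x \<Rightarrow> bool) \<Rightarrow> 'x \<times> real \<Rightarrow> (nat \<Rightarrow> bool)" where
  "lmp_obs lab z = (\<lambda>i. lab i (fst z))"

definition rel_d :: "(('x \<times> real) \<times> ('x \<times> real)) set \<Rightarrow> ('x \<times> real) option \<Rightarrow> ('x \<times> real) option \<Rightarrow> bool" where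
  "rel_d R a b \<longleftrightarrow> (a = None \<and> b = None) \<or> (\<exists>z w. a = Some z \<and> b = Some w \<and> (z, w) \<in> R)"

definition R_closed :: "'x measure \<Rightarrow> (('x \<times> real) \<times> ('x \<times> real)) set
      \<Rightarrow> (real \<Rightarrow> ('x \<times> real) option) set \<Rightarrow> bool" where
  "R_closed M R B \<longleftrightarrow> (\<forall>\<omega> \<in> B. \<forall>\<omega>' \<in> Traj M. (\<forall>t\<ge>0. rel_d R (\<omega> t) (\<omega>' t)) \<longrightarrow> \<omega>' \<in> B)"

definition is_bisimulation :: "'x measure \<Rightarrow> (nat \<Rightarrow> 'x \<Rightarrow> bool)
      \<Rightarrow> ('x \<times> real \<Rightarrow> (real \<Rightarrow> ('x \<times> real) option) measure)
      \<Rightarrow> (('x \<times> real) \<times> ('x \<times> real)) set \<Rightarrow> bool" where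
  "is_bisimulation M lab PP R \<longleftrightarrow> equiv (space (Emeas M)) R \<and>
     (\<forall>(z, w) \<in> R. lmp_obs lab z = lmp_obs lab w \<and>
        (\<forall>B \<in> sets (Gm M). R_closed M R B \<longrightarrow> emeasure (PP z) B = emeasure (PP w) B))"

definition time_coherent :: "(('x \<times> real) \<times> ('x \<times> real)) set \<Rightarrow> bool" where
  "time_coherent R \<longleftrightarrow> (\<forall>x y t. 0 \<le> t \<and> t < 1 \<and> ((x, t), (y, t)) \<in> R \<longrightarrow>
        (\<forall>s. 0 \<le> s \<and> s < 1 \<longrightarrow> ((x, s), (y, s)) \<in> R))"

definition time_closure :: "'x measure \<Rightarrow> (('x \<times> real) \<times> ('x \<times> real)) set
      \<Rightarrow> (('x \<times> real) \<times> ('x \<times> real)) set" where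
  "time_closure M R = \<Inter>{S. equiv (space (Emeas M)) S \<and> time_coherent S \<and> R \<subseteq> S}"

end

theory Submission
  imports Defs
begin


lemma Ed_gens_Pow: "({Some ` A | A. A \<in> sets (Emeas M)} \<union> {{None}}) \<subseteq> Pow (insert None (Some ` space (Emeas M)))"
  using sets.sets_into_space by fastforce

lemma space_Ed: "space (Ed M) = insert None (Some ` space (Emeas M))"
  unfolding Ed_def by (rule space_measure_of[OF Ed_gens_Pow])

lemma sets_Ed: "sets (Ed M) = sigma_sets (insert None (Some ` space (Emeas M))) ({Some ` A | A. A \<in> sets (Emeas M)} \<union> {{None}})"
  unfolding Ed_def by (rule sets_measure_of[OF Ed_gens_Pow])

lemma Some_img_sets_Ed: "A \<in> sets (Emeas M) \<Longrightarrow> Some ` A \<in> sets (Ed M)"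
  unfolding sets_Ed by (rule sigma_sets.Basic) blast

lemma None_sets_Ed: "{None} \<in> sets (Ed M)"
  unfolding sets_Ed by (rule sigma_sets.Basic) blast

lemma space_Emeas: "space (Emeas M) = space M \<times> {0..<1}"
  by (simp add: Emeas_def space_pair_measure)

lemma measurable_Some_Ed: "Some \<in> Emeas M \<rightarrow>\<^sub>M Ed M"
  unfolding Ed_def
proof (rule measurable_measure_of[OF Ed_gens_Pow])
  show "Some \<in> space (Emeas M) \<rightarrow> insert None (Some ` space (Emeas M))" by blast
  fix A assume "A \<in> {Some ` A |A. A \<in> sets (Emeas M)} \<union> {{None}}"
  then consider B where "A = Some ` B" "B \<in> sets (Emeas M)" | "A = {None}" by blast
  then show "Some -` A \<inter> space (Emeas M) \<in> sets (Emeas M)"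
  proof cases
    case 1
    have "Some -` A \<inter> space (Emeas M) = B"
      using 1 sets.sets_into_space[OF 1(2)] by blast
    then show ?thesis using 1 by simp
  next
    case 2
    then have "Some -` A \<inter> space (Emeas M) = {}" by blast
    then show ?thesis by simp
  qed
qed

lemma measurable_Ed_from_Some:
  assumes "(\<lambda>z. h (Some z)) \<in> Emeas M \<rightarrow>\<^sub>M N" "h None \<in> space N"
  shows "h \<in> Ed M \<rightarrow>\<^sub>M N"
proof (rule measurableI)
  fix w assume "w \<in> space (Ed M)"
  then show "h w \<in> space N" using assms measurable_space[OF assms(1)] by (auto simp: space_Ed)
next
  fix A assume A: "A \<in> sets N"
  have eq: "h -` A \<inter> space (Ed M) = Some ` ((\<lambda>z. h (Some z)) -` A \<inter> space (Emeas M)) \<union> (if h None \<in> A then {None} else {})"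
    by (auto simp: space_Ed)
  have s1: "Some ` ((\<lambda>z. h (Some z)) -` A \<inter> space (Emeas M)) \<in> sets (Ed M)"
    using measurable_sets[OF assms(1) A] by (rule Some_img_sets_Ed)
  have s2: "(if h None \<in> A then {None} else {}) \<in> sets (Ed M)"
    using None_sets_Ed[of M] by simp
  from sets.Un[OF s1 s2] show "h -` A \<inter> space (Ed M) \<in> sets (Ed M)"
    unfolding eq .
qed

lemma measurable_pt:
  assumes "f \<in> N \<rightarrow>\<^sub>M M" "g \<in> N \<rightarrow>\<^sub>M borel" "\<And>w. w \<in> space N \<Longrightarrow> g w \<in> {0..<1::real}"
  shows "(\<lambda>w. Some (f w, g w)) \<in> N \<rightarrow>\<^sub>M Ed M"
proof -
  have "g \<in> N \<rightarrow>\<^sub>M restrict_space borel {0..<1::real}"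
    using assms(2,3) by (intro measurable_restrict_space2) auto
  then have "(\<lambda>w. (f w, g w)) \<in> N \<rightarrow>\<^sub>M Emeas M"
    unfolding Emeas_def using assms(1) by (rule measurable_Pair[rotated])
  then show ?thesis using measurable_Some_Ed by (rule measurable_compose)
qed


lemma tauk_meas:
  assumes "lmp M \<tau>"
  shows "tauk M \<tau> k \<in> M \<rightarrow>\<^sub>M subprob_algebra M"
proof (induction k)
  case 0
  then show ?case using return_measurable[of M] by (simp add: tauk.simps(1)[abs_def])
next
  case (Suc k)
  have "(\<lambda>x. bind (\<tau> x) (tauk M \<tau> k)) \<in> M \<rightarrow>\<^sub>M subprob_algebra M"
    using assms Suc unfolding lmp_def by (rule measurable_bind2)
  then show ?case by (simp add: tauk.simps(2)[abs_def])
qed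

definition PdF :: "'x measure \<Rightarrow> ('x \<Rightarrow> 'x measure) \<Rightarrow> real \<Rightarrow> 'x \<times> real \<Rightarrow> ('x \<times> real) option set \<Rightarrow> ennreal" where
  "PdF M \<tau> t z C = emeasure (tauk M \<tau> (nat \<lfloor>t + snd z\<rfloor>) (fst z)) {y \<in> space M. Some (y, frac (t + snd z)) \<in> C}
               + (1 - emeasure (tauk M \<tau> (nat \<lfloor>t + snd z\<rfloor>) (fst z)) (space M)) * indicator C None"

lemma Pd_Some: "Pd M \<tau> t (Some z) = measure_of (space (Ed M)) (sets (Ed M)) (PdF M \<tau> t z)"
  by (cases z) (simp add: Pd_def PdF_def[abs_def])

lemma frac_in: "frac (x::real) \<in> {0..<1}"
  by (simp add: frac_lt_1)

lemma emeasure_Pd_Some: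
  fixes M :: "'x measure"
  assumes lmp: "lmp M \<tau>" and z: "z \<in> space (Emeas M)" and C: "C \<in> sets (Ed M)"
  shows "emeasure (Pd M \<tau> t (Some z)) C = PdF M \<tau> t z C"
proof -
  define \<nu> where "\<nu> = tauk M \<tau> (nat \<lfloor>t + snd z\<rfloor>) (fst z)"
  define g where "g = (\<lambda>y::'x. Some (y, frac (t + snd z)))"
  have x: "fst z \<in> space M" using z by (auto simp: space_Emeas)
  have K: "tauk M \<tau> (nat \<lfloor>t + snd z\<rfloor>) \<in> M \<rightarrow>\<^sub>M subprob_algebra M" by (rule tauk_meas[OF lmp])
  have sets\<nu>: "sets \<nu> = sets M" unfolding \<nu>_def by (rule sets_kernel[OF K x])
  then have space\<nu>: "space \<nu> = space M" by (rule sets_eq_imp_space_eq)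
  have gm: "g \<in> M \<rightarrow>\<^sub>M Ed M"
    unfolding g_def by (rule measurable_pt) (auto simp: frac_in frac_lt_1)
  then have gm': "g \<in> \<nu> \<rightarrow>\<^sub>M Ed M" by (simp add: measurable_cong_sets[OF sets\<nu> refl])
  define D where "D = distr \<nu> (Ed M) g"
  have ED: "\<And>C. C \<in> sets (Ed M) \<Longrightarrow> emeasure D C = emeasure \<nu> {y \<in> space M. Some (y, frac (t + snd z)) \<in> C}"
  proof -
    fix C assume "C \<in> sets (Ed M)"
    then have "emeasure D C = emeasure \<nu> (g -` C \<inter> space \<nu>)"
      unfolding D_def by (rule emeasure_distr[OF gm'])
    also have "g -` C \<inter> space \<nu> = {y \<in> space M. Some (y, frac (t + snd z)) \<in> C}"
      by (auto simp: space\<nu> g_def)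
    finally show "emeasure D C = emeasure \<nu> {y \<in> space M. Some (y, frac (t + snd z)) \<in> C}" .
  qed
  have sD: "sets D = sets (Ed M)" unfolding D_def by simp
  have F: "\<And>C. C \<in> sets (Ed M) \<Longrightarrow> PdF M \<tau> t z C = emeasure D C + (1 - emeasure \<nu> (space M)) * indicator C None"
    by (simp add: PdF_def ED \<nu>_def)
  have "emeasure (measure_of (space (Ed M)) (sets (Ed M)) (PdF M \<tau> t z)) C = PdF M \<tau> t z C"
  proof (rule emeasure_measure_of_sigma[OF sets.sigma_algebra_axioms _ _ C])
    show "positive (sets (Ed M)) (PdF M \<tau> t z)"
      unfolding positive_def by (simp add: PdF_def)
    show "countably_additive (sets (Ed M)) (PdF M \<tau> t z)"
      unfolding countably_additive_def
    proof (intro allI impI)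
      fix A :: "nat \<Rightarrow> _" assume A: "range A \<subseteq> sets (Ed M)" "disjoint_family A" "\<Union> (range A) \<in> sets (Ed M)"
      have "(\<Sum>i. PdF M \<tau> t z (A i)) = (\<Sum>i. emeasure D (A i) + (1 - emeasure \<nu> (space M)) * indicator (A i) None)"
        using A(1) by (simp add: F subset_eq)
      also have "\<dots> = (\<Sum>i. emeasure D (A i)) + (\<Sum>i. (1 - emeasure \<nu> (space M)) * indicator (A i) None)"
        by (rule suminf_add[symmetric]) (auto intro: summableI)
      also have "\<dots> = emeasure D (\<Union> (range A)) + (1 - emeasure \<nu> (space M)) * indicator (\<Union> (range A)) None"
        using A by (simp add: suminf_emeasure sD suminf_indicator)
      also have "\<dots> = PdF M \<tau> t z (\<Union> (range A))"
        using A(3) by (simp add: F)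
      finally show "(\<Sum>i. PdF M \<tau> t z (A i)) = PdF M \<tau> t z (\<Union> (range A))" .
    qed
  qed
  then show ?thesis by (simp add: Pd_Some)
qed

lemma sets_Pd: "sets (Pd M \<tau> t w) = sets (Ed M)"
  by (cases w) (auto simp: Pd_Some Pd_def)

lemma prob_Pd:
  assumes lmp: "lmp M \<tau>" and w: "w \<in> space (Ed M)"
  shows "prob_space (Pd M \<tau> t w)"
proof (cases w)
  case None
  then show ?thesis using w by (simp add: Pd_def prob_space_return)
next
  case (Some z)
  then have z: "z \<in> space (Emeas M)" using w by (auto simp: space_Ed)
  define \<nu> where "\<nu> = tauk M \<tau> (nat \<lfloor>t + snd z\<rfloor>) (fst z)"
  have x: "fst z \<in> space M" using z by (auto simp: space_Emeas)
  have K: "tauk M \<tau> (nat \<lfloor>t + snd z\<rfloor>) \<in> M \<rightarrow>\<^sub>M subprob_algebra M" by (rule tauk_meas[OF lmp])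
  have "subprob_space \<nu>" unfolding \<nu>_def by (rule subprob_space_kernel[OF K x])
  then have le: "emeasure \<nu> (space M) \<le> 1"
    using subprob_space.subprob_emeasure_le_1 by blast
  have sp: "space (Pd M \<tau> t w) = space (Ed M)"
    using sets_Pd[of M \<tau> t w] by (rule sets_eq_imp_space_eq)
  have "{y \<in> space M. Some (y, frac (t + snd z)) \<in> space (Ed M)} = space M"
    by (auto simp: space_Ed space_Emeas frac_lt_1)
  then have "emeasure (Pd M \<tau> t w) (space (Pd M \<tau> t w)) = emeasure \<nu> (space M) + (1 - emeasure \<nu> (space M))"
    using Some emeasure_Pd_Some[OF lmp z sets.top[of "Ed M"]] sp
    by (simp add: PdF_def \<nu>_def space_Ed)
  also have "\<dots> = 1" using le
    by (metis add_diff_inverse_ennreal ennreal_one_neq_top)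
  finally show ?thesis by (rule prob_spaceI)
qed

lemma frac_meas[measurable]: "(frac :: real \<Rightarrow> real) \<in> borel_measurable borel"
  unfolding frac_def by measurable

lemma snd_Emeas[measurable]: "snd \<in> Emeas M \<rightarrow>\<^sub>M borel"
  unfolding Emeas_def
  by (rule measurable_compose[OF measurable_snd measurable_restrict_space1[OF measurable_ident_sets[OF refl]]])

lemma Pd_kernel:
  assumes lmp: "lmp M \<tau>"
  shows "Pd M \<tau> t \<in> Ed M \<rightarrow>\<^sub>M subprob_algebra (Ed M)"
proof (rule measurable_subprob_algebra)
  fix w assume "w \<in> space (Ed M)"
  then show "subprob_space (Pd M \<tau> t w)" using prob_Pd[OF lmp] prob_space_imp_subprob_space by blast
next
  fix w show "sets (Pd M \<tau> t w) = sets (Ed M)" by (rule sets_Pd)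
next
  fix C assume C: "C \<in> sets (Ed M)"
  show "(\<lambda>w. emeasure (Pd M \<tau> t w) C) \<in> borel_measurable (Ed M)"
  proof (rule measurable_Ed_from_Some)
    show "emeasure (Pd M \<tau> t None) C \<in> space borel" by simp
    define k where "k = (\<lambda>z::'a \<times> real. nat \<lfloor>t + snd z\<rfloor>)"
    define F where "F = (\<lambda>n (z::'a \<times> real). emeasure (tauk M \<tau> n (fst z)) {y \<in> space M. Some (y, frac (t + snd z)) \<in> C}
               + (1 - emeasure (tauk M \<tau> n (fst z)) (space M)) * indicator C None)"
    have km: "k \<in> Emeas M \<rightarrow>\<^sub>M count_space UNIV"
      unfolding k_def by measurable
    have Fm: "F n \<in> borel_measurable (Emeas M)" for n
    proof -
      have K: "(\<lambda>z. tauk M \<tau> n (fst z)) \<in> Emeas M \<rightarrow>\<^sub>M subprob_algebra M"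
        unfolding Emeas_def by (rule measurable_compose[OF measurable_fst tauk_meas[OF lmp]])
      have hm: "(\<lambda>p. Some (snd p, frac (t + snd (fst p)))) \<in> (Emeas M \<Otimes>\<^sub>M M) \<rightarrow>\<^sub>M Ed M"
        by (rule measurable_pt) (auto simp: frac_in frac_lt_1)
      have "(SIGMA z:space (Emeas M). {y \<in> space M. Some (y, frac (t + snd z)) \<in> C})
              = (\<lambda>p. Some (snd p, frac (t + snd (fst p)))) -` C \<inter> space (Emeas M \<Otimes>\<^sub>M M)"
        by (auto simp: space_pair_measure)
      also have "\<dots> \<in> sets (Emeas M \<Otimes>\<^sub>M M)" using hm C by (rule measurable_sets)
      finally have S: "(SIGMA z:space (Emeas M). {y \<in> space M. Some (y, frac (t + snd z)) \<in> C}) \<in> sets (Emeas M \<Otimes>\<^sub>M M)" .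
      have 1: "(\<lambda>z. emeasure (tauk M \<tau> n (fst z)) {y \<in> space M. Some (y, frac (t + snd z)) \<in> C}) \<in> borel_measurable (Emeas M)"
        using S K by (rule emeasure_measurable_subprob_algebra2)
      have 2: "(\<lambda>z. emeasure (tauk M \<tau> n (fst z)) (space M)) \<in> borel_measurable (Emeas M)"
        using K by (rule measurable_emeasure_kernel) simp
      show ?thesis unfolding F_def using 1 2 by measurable
    qed
    have "(\<lambda>z. F (k z) z) \<in> borel_measurable (Emeas M)"
      using Fm km by (rule measurable_compose_countable)
    then show "(\<lambda>z. emeasure (Pd M \<tau> t (Some z)) C) \<in> borel_measurable (Emeas M)"
      by (rule measurable_cong[THEN iffD1, rotated])
         (simp add: emeasure_Pd_Some[OF lmp _ C] PdF_def F_def k_def)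
  qed
qed

lemma fdd_meas:
  assumes lmp: "lmp M \<tau>" and "\<forall>(t, A) \<in> set xs. A \<in> sets (Ed M)"
  shows "(\<lambda>y. fdd M \<tau> y t0 xs) \<in> borel_measurable (Ed M)"
  using assms(2)
proof (induction xs arbitrary: t0)
  case Nil
  then show ?case by simp
next
  case (Cons p xs)
  obtain t A where p: "p = (t, A)" by force
  with Cons have A: "A \<in> sets (Ed M)" and IH: "(\<lambda>y. fdd M \<tau> y t xs) \<in> borel_measurable (Ed M)" by auto
  have f: "(\<lambda>y. indicator A y * fdd M \<tau> y t xs) \<in> borel_measurable (Ed M)"
    using A IH by measurable
  have "(\<lambda>y. \<integral>\<^sup>+ z. indicator A z * fdd M \<tau> z t xs \<partial>(Pd M \<tau> (t - t0) y)) \<in> borel_measurable (Ed M)"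
    by (rule measurable_compose[OF Pd_kernel[OF lmp] nn_integral_measurable_subprob_algebra[OF f]])
  then show ?case by (simp add: p)
qed

lemma Pd_return:
  assumes x: "x \<in> space M" and "0 \<le> s + t" "s + t < 1" and lmp: "lmp M \<tau>" and s: "s \<in> {0..<1}"
  shows "Pd M \<tau> t (Some (x, s)) = return (Ed M) (Some (x, s + t))"
proof (rule measure_eqI)
  show "sets (Pd M \<tau> t (Some (x, s))) = sets (return (Ed M) (Some (x, s + t)))" by (simp add: sets_Pd)
  fix C assume "C \<in> sets (Pd M \<tau> t (Some (x, s)))"
  then have C: "C \<in> sets (Ed M)" by (simp add: sets_Pd)
  have fl: "nat \<lfloor>t + s\<rfloor> = 0" using assms by (simp add: floor_eq_iff)
  have fr: "frac (t + s) = s + t" using assms by (simp add: frac_eq add.commute)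
  have z: "(x, s) \<in> space (Emeas M)" using x s by (simp add: space_Emeas)
  have g: "(\<lambda>y. Some (y, s + t)) \<in> M \<rightarrow>\<^sub>M Ed M" by (rule measurable_pt) (use assms in auto)
  have "{y \<in> space M. Some (y, s + t) \<in> C} = (\<lambda>y. Some (y, s + t)) -` C \<inter> space M" by auto
  also have "\<dots> \<in> sets M" using g C by (rule measurable_sets)
  finally have Sm: "{y \<in> space M. Some (y, s + t) \<in> C} \<in> sets M" .
  have "emeasure (Pd M \<tau> t (Some (x, s))) C = indicator {y \<in> space M. Some (y, s + t) \<in> C} x"
    using emeasure_Pd_Some[OF lmp z C] Sm x by (simp add: PdF_def fl fr)
  also have "\<dots> = indicator C (Some (x, s + t))" using x by (simp split: split_indicator)
  also have "\<dots> = emeasure (return (Ed M) (Some (x, s + t))) C" using C by simp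
  finally show "emeasure (Pd M \<tau> t (Some (x, s))) C = emeasure (return (Ed M) (Some (x, s + t))) C" .
qed

lemma Pd_sum:
  assumes "t + s = t' + s'"
  shows "Pd M \<tau> t (Some (x, s)) = Pd M \<tau> t' (Some (x, s'))"
  using assms by (simp add: Pd_def)


section \<open>Topology\<close>

definition EdP :: "'x measure \<Rightarrow> ('x \<times> real) option set \<Rightarrow> bool" where
  "EdP M = (\<lambda>V. V \<subseteq> insert None (Some ` topspace (topE M))
       \<and> openin (topE M) (Some -` V)
       \<and> (None \<in> V \<longrightarrow> compactin (topE M) (topspace (topE M) - Some -` V)))"

lemma istopology_EdP: "istopology (EdP M)"
  unfolding istopology_def
proof (intro conjI allI impI)
  fix S T assume S: "EdP M S" and T: "EdP M T"
  show "EdP M (S \<inter> T)"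
    unfolding EdP_def
  proof (intro conjI impI)
    show "S \<inter> T \<subseteq> insert None (Some ` topspace (topE M))" using S unfolding EdP_def by blast
    have "Some -` (S \<inter> T) = Some -` S \<inter> Some -` T" by auto
    then show "openin (topE M) (Some -` (S \<inter> T))" using S T unfolding EdP_def by auto
    assume "None \<in> S \<inter> T"
    have "topspace (topE M) - Some -` (S \<inter> T) = (topspace (topE M) - Some -` S) \<union> (topspace (topE M) - Some -` T)"
      by auto
    then show "compactin (topE M) (topspace (topE M) - Some -` (S \<inter> T))"
      using S T \<open>None \<in> S \<inter> T\<close> unfolding EdP_def by (auto intro: compactin_Un)
  qed
next
  fix K assume K: "\<forall>V\<in>K. EdP M V"
  show "EdP M (\<Union>K)"
    unfolding EdP_def
  proof (intro conjI impI)
    show "\<Union>K \<subseteq> insert None (Some ` topspace (topE M))" using K unfolding EdP_def by blast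
    have eq: "Some -` (\<Union>K) = \<Union>((\<lambda>V. Some -` V) ` K)" by auto
    show op: "openin (topE M) (Some -` (\<Union>K))" unfolding eq using K unfolding EdP_def by auto
    assume "None \<in> \<Union>K"
    then obtain V where V: "V \<in> K" "None \<in> V" by auto
    then have c: "compactin (topE M) (topspace (topE M) - Some -` V)" using K unfolding EdP_def by auto
    show "compactin (topE M) (topspace (topE M) - Some -` (\<Union>K))"
    proof (rule closed_compactin[OF c])
      show "topspace (topE M) - Some -` \<Union> K \<subseteq> topspace (topE M) - Some -` V" using V by auto
      show "closedin (topE M) (topspace (topE M) - Some -` \<Union> K)" using op by auto
    qed
  qed
qed

lemma openin_topEd: "openin (topEd M) = EdP M"
  unfolding topEd_def EdP_def[symmetric] by (rule topology_inverse'[OF istopology_EdP])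

lemma topspace_topE: "topspace (topE M) = space M \<times> {0..<1}"
  by (simp add: topE_def)

lemma topspace_topEd: "topspace (topEd M) = insert None (Some ` topspace (topE M))"
proof -
  have eq: "Some -` insert None (Some ` topspace (topE M)) = topspace (topE M)" by auto
  have "EdP M (insert None (Some ` topspace (topE M)))"
    unfolding EdP_def eq by auto
  then have "insert None (Some ` topspace (topE M)) \<subseteq> topspace (topEd M)"
    by (metis openin_subset openin_topEd)
  moreover have "topspace (topEd M) \<subseteq> insert None (Some ` topspace (topE M))"
    using openin_topspace[of "topEd M"] unfolding openin_topEd EdP_def by blast
  ultimately show ?thesis by blast
qed

lemma limitin_Some:
  assumes "limitin (topE M) f l F"
  shows "limitin (topEd M) (\<lambda>u. Some (f u)) (Some l) F"
  unfolding limitin_def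
proof (intro conjI allI impI)
  show "Some l \<in> topspace (topEd M)" using limitin_topspace[OF assms] by (simp add: topspace_topEd)
  fix U assume U: "openin (topEd M) U \<and> Some l \<in> U"
  then have "openin (topE M) (Some -` U)" by (simp add: openin_topEd EdP_def)
  moreover have "l \<in> Some -` U" using U by simp
  ultimately have "eventually (\<lambda>u. f u \<in> Some -` U) F" using assms by (rule limitinD[rotated])
  then show "eventually (\<lambda>u. Some (f u) \<in> U) F" by simp
qed

lemma limitin_curve:
  assumes x: "x \<in> space M" and lim: "(g \<longlongrightarrow> c) F" and c: "c \<in> {0..<1}"
    and ev: "eventually (\<lambda>u. g u \<in> {0..<1}) F"
  shows "limitin (topEd M) (\<lambda>u. Some (x, g u)) (Some (x, c)) F"
proof (rule limitin_Some)
  show "limitin (topE M) (\<lambda>u. (x, g u)) (x, c) F"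
    unfolding topE_def limitin_pairwise
  proof
    show "limitin (discrete_topology (space M)) (fst \<circ> (\<lambda>u. (x, g u))) (fst (x, c)) F"
      using x by (simp add: o_def)
    show "limitin (top_of_set {0..<1}) (snd \<circ> (\<lambda>u. (x, g u))) (snd (x, c)) F"
      using lim c ev by (simp add: o_def limitin_subtopology)
  qed
qed

lemma limitin_shift_right:
  fixes a c :: real
  assumes "limitin X \<eta> l (at_right a)"
  shows "limitin X (\<lambda>v. \<eta> (v - c)) l (at_right (a + c))"
  unfolding limitin_def
proof (intro conjI allI impI)
  show "l \<in> topspace X" using limitin_topspace[OF assms] .
  fix U assume "openin X U \<and> l \<in> U"
  then have "eventually (\<lambda>w. \<eta> w \<in> U) (at_right a)" using assms limitinD by fastforce
  then obtain b where b: "b > a" "\<And>w. w > a \<Longrightarrow> w < b \<Longrightarrow> \<eta> w \<in> U"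
    unfolding eventually_at_right_field by blast
  show "eventually (\<lambda>v. \<eta> (v - c) \<in> U) (at_right (a + c))"
    unfolding eventually_at_right_field
    by (rule exI[of _ "b + c"]) (auto intro!: b(2) simp: b(1))
qed

lemma limitin_shift_left:
  fixes a c :: real
  assumes "limitin X \<eta> l (at_left a)"
  shows "limitin X (\<lambda>v. \<eta> (v - c)) l (at_left (a + c))"
  unfolding limitin_def
proof (intro conjI allI impI)
  show "l \<in> topspace X" using limitin_topspace[OF assms] .
  fix U assume "openin X U \<and> l \<in> U"
  then have "eventually (\<lambda>w. \<eta> w \<in> U) (at_left a)" using assms limitinD by fastforce
  then obtain b where b: "b < a" "\<And>w. w > b \<Longrightarrow> w < a \<Longrightarrow> \<eta> w \<in> U"
    unfolding eventually_at_left_field by blast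
  show "eventually (\<lambda>v. \<eta> (v - c) \<in> U) (at_left (a + c))"
    unfolding eventually_at_left_field
    by (rule exI[of _ "b + c"]) (auto intro!: b(2) simp: b(1))
qed


definition psi :: "'x \<Rightarrow> real \<Rightarrow> real \<Rightarrow> (real \<Rightarrow> ('x \<times> real) option) \<Rightarrow> real \<Rightarrow> ('x \<times> real) option" where
  "psi x s d \<eta> = (\<lambda>u. if u < 0 then None else if u < d then Some (x, s + u) else \<eta> (u - d))"

definition theta :: "real \<Rightarrow> (real \<Rightarrow> ('x \<times> real) option) \<Rightarrow> real \<Rightarrow> ('x \<times> real) option" where
  "theta d \<eta> = (\<lambda>u. if u < 0 then None else \<eta> (u + d))"

lemma TrajD:
  assumes "\<eta> \<in> Traj M"
  shows "\<And>t. t \<ge> 0 \<Longrightarrow> \<eta> t \<in> insert None (Some ` space (Emeas M))"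
    and "\<And>t. t < 0 \<Longrightarrow> \<eta> t = None"
    and "\<And>t t'. t \<ge> 0 \<Longrightarrow> \<eta> t = None \<Longrightarrow> t' \<ge> t \<Longrightarrow> \<eta> t' = None"
    and "\<And>t. t \<ge> 0 \<Longrightarrow> limitin (topEd M) \<eta> (\<eta> t) (at_right t)"
    and "\<And>t. t > 0 \<Longrightarrow> \<exists>l. limitin (topEd M) \<eta> l (at_left t)"
  using assms unfolding Traj_def cadlag_def by blast+

lemma theta_Traj:
  assumes \<eta>: "\<eta> \<in> Traj M" and d: "0 \<le> d"
  shows "theta d \<eta> \<in> Traj M"
  unfolding Traj_def cadlag_def mem_Collect_eq
proof (intro conjI allI impI)
  fix u :: real
  assume u: "0 \<le> u"
  show "theta d \<eta> u \<in> insert None (Some ` space (Emeas M))"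
    using TrajD(1)[OF \<eta>, of "u + d"] u d by (simp add: theta_def)
  show "\<And>t'. theta d \<eta> u = None \<Longrightarrow> u \<le> t' \<Longrightarrow> theta d \<eta> t' = None"
    using TrajD(3)[OF \<eta>, of "u + d"] u d by (auto simp: theta_def)
  have "limitin (topEd M) (\<lambda>v. \<eta> (v - (-d))) (\<eta> (u + d)) (at_right (u + d + (-d)))"
    by (rule limitin_shift_right) (rule TrajD(4)[OF \<eta>], use u d in simp)
  then have L: "limitin (topEd M) (\<lambda>v. \<eta> (v + d)) (\<eta> (u + d)) (at_right u)" by simp
  have ev: "eventually (\<lambda>v. \<eta> (v + d) = theta d \<eta> v) (at_right u)"
    unfolding eventually_at_right_field using u by (intro exI[of _ "u + 1"]) (auto simp: theta_def)
  show "limitin (topEd M) (theta d \<eta>) (theta d \<eta> u) (at_right u)"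
    using limitin_transform_eventually[OF ev L] u by (simp add: theta_def)
next
  fix u :: real
  assume u: "0 < u"
  obtain l where "limitin (topEd M) \<eta> l (at_left (u + d))" using TrajD(5)[OF \<eta>, of "u + d"] u d by auto
  then have "limitin (topEd M) (\<lambda>v. \<eta> (v - (-d))) l (at_left (u + d + (-d)))"
    by (rule limitin_shift_left)
  then have L: "limitin (topEd M) (\<lambda>v. \<eta> (v + d)) l (at_left u)" by simp
  have ev: "eventually (\<lambda>v. \<eta> (v + d) = theta d \<eta> v) (at_left u)"
    unfolding eventually_at_left_field using u by (intro exI[of _ 0]) (auto simp: theta_def)
  show "\<exists>l. limitin (topEd M) (theta d \<eta>) l (at_left u)"
    using limitin_transform_eventually[OF ev L] by blast
next
  fix u :: real assume "u < 0" then show "theta d \<eta> u = None" by (simp add: theta_def)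
qed

lemma psi_Traj:
  assumes \<eta>: "\<eta> \<in> Traj M" and x: "x \<in> space M" and s: "0 \<le> s" and d: "0 < d" and sd: "s + d < 1"
  shows "psi x s d \<eta> \<in> Traj M"
  unfolding Traj_def cadlag_def mem_Collect_eq
proof (intro conjI allI impI)
  fix u :: real
  assume u: "0 \<le> u"
  show "psi x s d \<eta> u \<in> insert None (Some ` space (Emeas M))"
  proof (cases "u < d")
    case True
    then show ?thesis using u s sd x by (auto simp: psi_def space_Emeas)
  next
    case False
    then show ?thesis using TrajD(1)[OF \<eta>, of "u - d"] u by (simp add: psi_def)
  qed
  show "\<And>t'. psi x s d \<eta> u = None \<Longrightarrow> u \<le> t' \<Longrightarrow> psi x s d \<eta> t' = None"
    using TrajD(3)[OF \<eta>, of "u - d"] u d by (auto simp: psi_def split: if_splits)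
  show "limitin (topEd M) (psi x s d \<eta>) (psi x s d \<eta> u) (at_right u)"
  proof (cases "u < d")
    case True
    have L: "limitin (topEd M) (\<lambda>v. Some (x, s + v)) (Some (x, s + u)) (at_right u)"
    proof (rule limitin_curve[OF x])
      show "((\<lambda>v. s + v) \<longlongrightarrow> s + u) (at_right u)" by (intro tendsto_intros)
      show "s + u \<in> {0..<1}" using u s True sd by auto
      show "eventually (\<lambda>v. s + v \<in> {0..<1}) (at_right u)"
        unfolding eventually_at_right_field using True u s sd by (intro exI[of _ d]) auto
    qed
    have ev: "eventually (\<lambda>v. Some (x, s + v) = psi x s d \<eta> v) (at_right u)"
      unfolding eventually_at_right_field using True u by (intro exI[of _ d]) (auto simp: psi_def)
    show ?thesis using limitin_transform_eventually[OF ev L] u True by (simp add: psi_def)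
  next
    case False
    have "limitin (topEd M) (\<lambda>v. \<eta> (v - d)) (\<eta> (u - d)) (at_right (u - d + d))"
      by (rule limitin_shift_right) (rule TrajD(4)[OF \<eta>], use False in simp)
    then have L: "limitin (topEd M) (\<lambda>v. \<eta> (v - d)) (\<eta> (u - d)) (at_right u)" by simp
    have ev: "eventually (\<lambda>v. \<eta> (v - d) = psi x s d \<eta> v) (at_right u)"
      unfolding eventually_at_right_field using False u by (intro exI[of _ "u + 1"]) (auto simp: psi_def)
    show ?thesis using limitin_transform_eventually[OF ev L] u False by (simp add: psi_def)
  qed
next
  fix u :: real
  assume u: "0 < u"
  show "\<exists>l. limitin (topEd M) (psi x s d \<eta>) l (at_left u)"
  proof (cases "u \<le> d")
    case True
    have L: "limitin (topEd M) (\<lambda>v. Some (x, s + v)) (Some (x, s + u)) (at_left u)"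
    proof (rule limitin_curve[OF x])
      show "((\<lambda>v. s + v) \<longlongrightarrow> s + u) (at_left u)" by (intro tendsto_intros)
      show "s + u \<in> {0..<1}" using u s True sd by auto
      show "eventually (\<lambda>v. s + v \<in> {0..<1}) (at_left u)"
        unfolding eventually_at_left_field using True u s sd by (intro exI[of _ 0]) auto
    qed
    have ev: "eventually (\<lambda>v. Some (x, s + v) = psi x s d \<eta> v) (at_left u)"
      unfolding eventually_at_left_field using True u by (intro exI[of _ 0]) (auto simp: psi_def)
    show ?thesis using limitin_transform_eventually[OF ev L] by blast
  next
    case False
    obtain l where "limitin (topEd M) \<eta> l (at_left (u - d))" using TrajD(5)[OF \<eta>, of "u - d"] False by auto
    then have "limitin (topEd M) (\<lambda>v. \<eta> (v - d)) l (at_left (u - d + d))"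
      by (rule limitin_shift_left)
    then have L: "limitin (topEd M) (\<lambda>v. \<eta> (v - d)) l (at_left u)" by simp
    have ev: "eventually (\<lambda>v. \<eta> (v - d) = psi x s d \<eta> v) (at_left u)"
      unfolding eventually_at_left_field using False u d by (intro exI[of _ d]) (auto simp: psi_def)
    show ?thesis using limitin_transform_eventually[OF ev L] by blast
  qed
next
  fix u :: real assume "u < 0" then show "psi x s d \<eta> u = None" by (simp add: psi_def)
qed


section \<open>Cylinders\<close>

definition GmG :: "'x measure \<Rightarrow> (real \<Rightarrow> ('x \<times> real) option) set set" where
  "GmG M = {{\<omega> \<in> Traj M. \<omega> s \<in> A} | s A. 0 \<le> s \<and> A \<in> sets (Ed M)}"

definition cyl :: "'x measure \<Rightarrow> (real \<times> ('x \<times> real) option set) list \<Rightarrow> (real \<Rightarrow> ('x \<times> real) option) set" where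
  "cyl M xs = {\<omega> \<in> Traj M. \<forall>(t, A) \<in> set xs. \<omega> t \<in> A}"

definition valid :: "'x measure \<Rightarrow> (real \<times> ('x \<times> real) option set) list \<Rightarrow> bool" where
  "valid M xs \<longleftrightarrow> sorted (map fst xs) \<and> (\<forall>(t, A) \<in> set xs. 0 \<le> t \<and> A \<in> sets (Ed M))"

definition Cyls :: "'x measure \<Rightarrow> (real \<Rightarrow> ('x \<times> real) option) set set" where
  "Cyls M = {cyl M xs | xs. valid M xs}"

lemma GmG_Pow: "GmG M \<subseteq> Pow (Traj M)"
  unfolding GmG_def by auto

lemma Gm_eq: "Gm M = sigma (Traj M) (GmG M)"
  unfolding Gm_def GmG_def ..

lemma space_Gm: "space (Gm M) = Traj M"
  unfolding Gm_eq by (rule space_measure_of[OF GmG_Pow])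

lemma sets_Gm: "sets (Gm M) = sigma_sets (Traj M) (GmG M)"
  unfolding Gm_eq by (rule sets_measure_of[OF GmG_Pow])

lemma gen_in_Gm: "0 \<le> s \<Longrightarrow> A \<in> sets (Ed M) \<Longrightarrow> {\<omega> \<in> Traj M. \<omega> s \<in> A} \<in> sets (Gm M)"
  unfolding sets_Gm by (rule sigma_sets.Basic) (auto simp: GmG_def)

lemma cyl_in_Gm: "(\<forall>(t, A) \<in> set xs. 0 \<le> t \<and> A \<in> sets (Ed M)) \<Longrightarrow> cyl M xs \<in> sets (Gm M)"
proof (induction xs)
  case Nil
  have "cyl M [] = space (Gm M)" by (simp add: cyl_def space_Gm)
  then show ?case by simp
next
  case (Cons p xs)
  obtain t A where p: "p = (t, A)" by force
  have "cyl M (p # xs) = {\<omega> \<in> Traj M. \<omega> t \<in> A} \<inter> cyl M xs" by (auto simp: cyl_def p)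
  moreover have "{\<omega> \<in> Traj M. \<omega> t \<in> A} \<in> sets (Gm M)" using Cons.prems p by (intro gen_in_Gm) auto
  moreover have "cyl M xs \<in> sets (Gm M)" using Cons by auto
  ultimately show ?case by simp
qed

lemma sets_Gm_Cyls: "sets (Gm M) = sigma_sets (Traj M) (Cyls M)"
proof
  have "Cyls M \<subseteq> sets (Gm M)" unfolding Cyls_def valid_def using cyl_in_Gm by blast
  from sets.sigma_sets_subset[OF this] show "sigma_sets (Traj M) (Cyls M) \<subseteq> sets (Gm M)"
    by (simp add: space_Gm)
  have "GmG M \<subseteq> Cyls M"
  proof
    fix G assume "G \<in> GmG M"
    then obtain s A where G: "G = {\<omega> \<in> Traj M. \<omega> s \<in> A}" "0 \<le> s" "A \<in> sets (Ed M)"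
      unfolding GmG_def by blast
    then have "G = cyl M [(s, A)]" "valid M [(s, A)]" by (auto simp: cyl_def valid_def)
    then show "G \<in> Cyls M" unfolding Cyls_def by blast
  qed
  then show "sets (Gm M) \<subseteq> sigma_sets (Traj M) (Cyls M)"
    unfolding sets_Gm by (rule sigma_sets_mono')
qed

lemma Cyls_Pow: "Cyls M \<subseteq> Pow (Traj M)"
  unfolding Cyls_def cyl_def by auto

lemma Int_stable_Cyls: "Int_stable (Cyls M)"
  unfolding Int_stable_def
proof (intro ballI)
  fix a b assume "a \<in> Cyls M" "b \<in> Cyls M"
  then obtain xs ys where a: "a = cyl M xs" "valid M xs" and b: "b = cyl M ys" "valid M ys"
    unfolding Cyls_def by blast
  have "a \<inter> b = cyl M (sort_key fst (xs @ ys))" using a b by (auto simp: cyl_def)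
  moreover have "valid M (sort_key fst (xs @ ys))" using a b by (auto simp: valid_def)
  ultimately show "a \<inter> b \<in> Cyls M" unfolding Cyls_def by blast
qed

lemma Gm_unique:
  assumes sP: "sets P = sets (Gm M)" and sQ: "sets Q = sets (Gm M)"
    and eq: "\<And>xs. valid M xs \<Longrightarrow> emeasure P (cyl M xs) = emeasure Q (cyl M xs)"
    and fin: "emeasure P (Traj M) \<noteq> \<infinity>"
  shows "P = Q"
proof (rule measure_eqI_generator_eq[OF Int_stable_Cyls Cyls_Pow])
  show "\<And>X. X \<in> Cyls M \<Longrightarrow> emeasure P X = emeasure Q X" using eq unfolding Cyls_def by blast
  show "sets P = sigma_sets (Traj M) (Cyls M)" using sP sets_Gm_Cyls by simp
  show "sets Q = sigma_sets (Traj M) (Cyls M)" using sQ sets_Gm_Cyls by simp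
  have "cyl M [] = Traj M" "valid M []" by (auto simp: cyl_def valid_def)
  then show "range (\<lambda>i::nat. Traj M) \<subseteq> Cyls M" unfolding Cyls_def by auto
  show "(\<Union>i::nat. Traj M) = Traj M" by simp
  show "\<And>i::nat. emeasure P (Traj M) \<noteq> \<infinity>" by (rule fin)
qed

lemma law_transfer:
  assumes sP: "sets P = sets (Gm M)" and sQ: "sets Q = sets (Gm M)"
    and \<Phi>: "\<Phi> \<in> Gm M \<rightarrow>\<^sub>M Gm M"
    and fin: "emeasure Q (Traj M) \<noteq> \<infinity>"
    and eq: "\<And>xs. valid M xs \<Longrightarrow> emeasure P (\<Phi> -` cyl M xs \<inter> Traj M) = emeasure Q (cyl M xs)"
    and B: "B \<in> sets (Gm M)"
  shows "emeasure Q B = emeasure P (\<Phi> -` B \<inter> Traj M)"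
proof -
  have spP: "space P = Traj M" using sets_eq_imp_space_eq[OF sP] by (simp add: space_Gm)
  have \<Phi>': "\<Phi> \<in> P \<rightarrow>\<^sub>M Gm M" using \<Phi> by (simp add: measurable_cong_sets[OF sP refl])
  have dist: "\<And>X. X \<in> sets (Gm M) \<Longrightarrow> emeasure (distr P (Gm M) \<Phi>) X = emeasure P (\<Phi> -` X \<inter> Traj M)"
    using emeasure_distr[OF \<Phi>'] spP by simp
  have "Q = distr P (Gm M) \<Phi>"
  proof (rule Gm_unique[OF sQ])
    show "sets (distr P (Gm M) \<Phi>) = sets (Gm M)" by simp
    fix xs assume v: "valid M xs"
    then have "cyl M xs \<in> sets (Gm M)" by (intro cyl_in_Gm) (auto simp: valid_def)
    then show "emeasure Q (cyl M xs) = emeasure (distr P (Gm M) \<Phi>) (cyl M xs)"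
      using eq[OF v] dist by simp
  next
    show "emeasure Q (Traj M) \<noteq> \<infinity>" by (rule fin)
  qed
  then show ?thesis using dist[OF B] by simp
qed

lemma fdd_cong_start:
  assumes "\<And>u. Pd M \<tau> (u - t0) w = Pd M \<tau> (u - t0') w'"
  shows "fdd M \<tau> w t0 xs = fdd M \<tau> w' t0' xs"
  using assms by (cases xs) auto

lemma fdd_shift:
  "fdd M \<tau> w t0 xs = fdd M \<tau> w (t0 + c) (map (\<lambda>(u, A). (u + c, A)) xs)"
proof (induction xs arbitrary: w t0)
  case Nil
  then show ?case by simp
next
  case (Cons p xs)
  obtain u A where p: "p = (u, A)" by force
  show ?case using Cons.IH[of _ u] by (simp add: p)
qed

lemma fdd_theta:
  assumes "s = t + d"
  shows "fdd M \<tau> (Some (x, t)) 0 (map (\<lambda>(u, A). (u + d, A)) xs) = fdd M \<tau> (Some (x, s)) 0 xs"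
proof -
  have "fdd M \<tau> (Some (x, s)) 0 xs = fdd M \<tau> (Some (x, s)) (0 + d) (map (\<lambda>(u, A). (u + d, A)) xs)"
    by (rule fdd_shift)
  also have "\<dots> = fdd M \<tau> (Some (x, t)) 0 (map (\<lambda>(u, A). (u + d, A)) xs)"
    by (rule fdd_cong_start, rule Pd_sum) (use assms in simp)
  finally show ?thesis by simp
qed

lemma fdd_prefix:
  assumes lmp: "lmp M \<tau>" and x: "x \<in> space M" and s: "0 \<le> s" and d: "0 < d" and sd: "s + d < 1"
  shows "sorted (map fst xs) \<Longrightarrow> (\<forall>(u, A) \<in> set xs. t0 \<le> u \<and> A \<in> sets (Ed M)) \<Longrightarrow> 0 \<le> t0 \<Longrightarrow> t0 \<le> d \<Longrightarrow>
   fdd M \<tau> (Some (x, s + t0)) t0 xs =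
     (if (\<forall>(u, A) \<in> set xs. u < d \<longrightarrow> Some (x, s + u) \<in> A)
      then fdd M \<tau> (Some (x, s + d)) 0 (map (\<lambda>(u, A). (u - d, A)) (filter (\<lambda>p. d \<le> fst p) xs)) else 0)"
proof (induction xs arbitrary: t0)
  case Nil
  then show ?case by simp
next
  case (Cons p xs)
  obtain u A where p: "p = (u, A)" by force
  have so: "sorted (map fst xs)" and ge: "\<forall>q \<in> set xs. u \<le> fst q" using Cons.prems(1) by (auto simp: p)
  have A: "A \<in> sets (Ed M)" and tu: "t0 \<le> u" using Cons.prems(2) by (auto simp: p)
  have xsA: "\<forall>(v, B) \<in> set xs. u \<le> v \<and> B \<in> sets (Ed M)" using Cons.prems(2) ge by auto
  show ?case
  proof (cases "d \<le> u")
    case True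
    have allge: "\<forall>q \<in> set (p # xs). d \<le> fst q" using True ge p by auto
    then have filt: "filter (\<lambda>p. d \<le> fst p) (p # xs) = p # xs" by simp
    have cond: "(\<forall>(u, A) \<in> set (p # xs). u < d \<longrightarrow> Some (x, s + u) \<in> A)" using allge by auto
    have "fdd M \<tau> (Some (x, s + t0)) t0 (p # xs) = fdd M \<tau> (Some (x, s + d)) d (p # xs)"
      by (rule fdd_cong_start, rule Pd_sum) simp
    also have "\<dots> = fdd M \<tau> (Some (x, s + d)) (d + - d) (map (\<lambda>(u, A). (u + - d, A)) (p # xs))"
      by (rule fdd_shift)
    also have "\<dots> = fdd M \<tau> (Some (x, s + d)) 0 (map (\<lambda>(u, A). (u - d, A)) (p # xs))"
      by simp
    finally show ?thesis using filt cond by simp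
  next
    case False
    have fdm: "(\<lambda>y. fdd M \<tau> y u xs) \<in> borel_measurable (Ed M)"
      by (rule fdd_meas[OF lmp]) (use xsA in auto)
    have fm: "(\<lambda>y. indicator A y * fdd M \<tau> y u xs) \<in> borel_measurable (Ed M)"
      using A fdm by measurable
    have pt: "Some (x, s + u) \<in> space (Ed M)" using x s False sd tu Cons.prems(3) by (auto simp: space_Ed space_Emeas)
    have "Pd M \<tau> (u - t0) (Some (x, s + t0)) = return (Ed M) (Some (x, s + t0 + (u - t0)))"
      by (rule Pd_return[OF x _ _ lmp]) (use s False sd tu Cons.prems(3,4) in auto)
    then have "fdd M \<tau> (Some (x, s + t0)) t0 (p # xs) = (\<integral>\<^sup>+ y. indicator A y * fdd M \<tau> y u xs \<partial>return (Ed M) (Some (x, s + u)))"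
      by (simp add: p)
    also have "\<dots> = indicator A (Some (x, s + u)) * fdd M \<tau> (Some (x, s + u)) u xs"
      by (rule nn_integral_return[OF pt fm])
    also have "fdd M \<tau> (Some (x, s + u)) u xs =
     (if (\<forall>(u, A) \<in> set xs. u < d \<longrightarrow> Some (x, s + u) \<in> A)
      then fdd M \<tau> (Some (x, s + d)) 0 (map (\<lambda>(u, A). (u - d, A)) (filter (\<lambda>p. d \<le> fst p) xs)) else 0)"
      using Cons.IH[OF so] xsA tu Cons.prems(3) False by auto
    finally show ?thesis using False by (simp add: p split: split_indicator)
  qed
qed


section \<open>Laws under time maps\<close>

lemma PP_sets: "trajectory_laws M \<tau> PP \<Longrightarrow> z \<in> space (Emeas M) \<Longrightarrow> sets (PP z) = sets (Gm M)"
  unfolding trajectory_laws_def by blast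

lemma PP_cyl: "trajectory_laws M \<tau> PP \<Longrightarrow> z \<in> space (Emeas M) \<Longrightarrow> valid M xs \<Longrightarrow>
    emeasure (PP z) (cyl M xs) = fdd M \<tau> (Some z) 0 xs"
  unfolding trajectory_laws_def valid_def cyl_def by blast

lemma PP_Traj: "trajectory_laws M \<tau> PP \<Longrightarrow> z \<in> space (Emeas M) \<Longrightarrow> emeasure (PP z) (Traj M) = 1"
  using PP_cyl[of M \<tau> PP z "[]"] by (simp add: cyl_def valid_def)

lemma theta_meas:
  assumes d: "0 \<le> d"
  shows "theta d \<in> Gm M \<rightarrow>\<^sub>M Gm M"
proof (rule measurable_sigma_sets[OF sets_Gm GmG_Pow])
  show "theta d \<in> space (Gm M) \<rightarrow> Traj M" using theta_Traj[OF _ d] by (auto simp: space_Gm)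
  fix G assume "G \<in> GmG M"
  then obtain u A where G: "G = {\<omega> \<in> Traj M. \<omega> u \<in> A}" "0 \<le> u" "A \<in> sets (Ed M)"
    unfolding GmG_def by blast
  have "theta d -` G \<inter> space (Gm M) = {\<eta> \<in> Traj M. \<eta> (u + d) \<in> A}"
    using G theta_Traj[OF _ d] by (auto simp: space_Gm theta_def)
  also have "\<dots> \<in> sets (Gm M)" using G d by (intro gen_in_Gm) auto
  finally show "theta d -` G \<inter> space (Gm M) \<in> sets (Gm M)" .
qed

lemma psi_meas:
  assumes x: "x \<in> space M" and s: "0 \<le> s" and d: "0 < d" and sd: "s + d < 1"
  shows "psi x s d \<in> Gm M \<rightarrow>\<^sub>M Gm M"
proof (rule measurable_sigma_sets[OF sets_Gm GmG_Pow])
  show "psi x s d \<in> space (Gm M) \<rightarrow> Traj M" using psi_Traj[OF _ x s d sd] by (auto simp: space_Gm)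
  fix G assume "G \<in> GmG M"
  then obtain u A where G: "G = {\<omega> \<in> Traj M. \<omega> u \<in> A}" "0 \<le> u" "A \<in> sets (Ed M)"
    unfolding GmG_def by blast
  show "psi x s d -` G \<inter> space (Gm M) \<in> sets (Gm M)"
  proof (cases "u < d")
    case True
    have "psi x s d -` G \<inter> space (Gm M) = (if Some (x, s + u) \<in> A then space (Gm M) else {})"
      using G True psi_Traj[OF _ x s d sd] by (auto simp: space_Gm psi_def)
    then show ?thesis by simp
  next
    case False
    have "psi x s d -` G \<inter> space (Gm M) = {\<eta> \<in> Traj M. \<eta> (u - d) \<in> A}"
      using G False psi_Traj[OF _ x s d sd] by (auto simp: space_Gm psi_def)
    also have "\<dots> \<in> sets (Gm M)" using G False by (intro gen_in_Gm) auto
    finally show ?thesis .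
  qed
qed

lemma sorted_shift: "sorted (map fst xs) \<Longrightarrow> sorted (map fst (map (\<lambda>(u, A). (u + c :: real, A)) xs))"
  by (induction xs) auto

lemma sorted_shift': "sorted (map fst xs) \<Longrightarrow> sorted (map fst (map (\<lambda>(u, A). (u - c :: real, A)) xs))"
  by (induction xs) auto

lemma ball_pairs_cong:
  assumes "\<And>u A. (u, A) \<in> set xs \<Longrightarrow> P u A = Q u A"
  shows "(\<forall>(u, A) \<in> set xs. P u A) = (\<forall>(u, A) \<in> set xs. Q u A)"
  using assms by (auto simp: Ball_def split_paired_All)

lemma ball_map_shift:
  "(\<forall>(u, A) \<in> set (map (\<lambda>(u, A). (f u, A)) xs). P u A) = (\<forall>(u, A) \<in> set xs. P (f u) A)"
  by (induction xs) auto

lemma ball_split_psi: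
  "(\<forall>(u, A) \<in> set xs. if u < (d::real) then P u A else \<eta> (u - d) \<in> A) =
    ((\<forall>(u, A) \<in> set xs. u < d \<longrightarrow> P u A) \<and>
     (\<forall>(u, A) \<in> set (map (\<lambda>(u, A). (u - d, A)) (filter (\<lambda>p. d \<le> fst p) xs)). \<eta> u \<in> A))"
  unfolding ball_map_shift by (auto simp: Ball_def split_paired_All not_less)





lemma law_theta:
  assumes tl: "trajectory_laws M \<tau> PP" and x: "x \<in> space M" and t: "t \<in> {0..<1}" and s: "s \<in> {0..<1}"
    and d: "s = t + d" "0 \<le> d" and B: "B \<in> sets (Gm M)"
  shows "emeasure (PP (x, s)) B = emeasure (PP (x, t)) (theta d -` B \<inter> Traj M)"
proof (rule law_transfer[OF PP_sets[OF tl] PP_sets[OF tl] theta_meas[OF d(2)] _ _ B])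
  show zt: "(x, t) \<in> space (Emeas M)" and zs: "(x, s) \<in> space (Emeas M)" using x s t by (auto simp: space_Emeas)
  show "emeasure (PP (x, s)) (Traj M) \<noteq> \<infinity>" using PP_Traj[OF tl zs] by simp
  fix xs assume v: "valid M xs"
  have key: "(\<forall>(u, A) \<in> set xs. theta d \<eta> u \<in> A) = (\<forall>(u, A) \<in> set (map (\<lambda>(u, A). (u + d, A)) xs). \<eta> u \<in> A)" for \<eta>
    unfolding ball_map_shift
  proof (rule ball_pairs_cong)
    fix u A assume "(u, A) \<in> set xs"
    then have "0 \<le> u" using v unfolding valid_def by fastforce
    then show "(theta d \<eta> u \<in> A) = (\<eta> (u + d) \<in> A)" by (simp add: theta_def)
  qed
  have eq: "theta d -` cyl M xs \<inter> Traj M = cyl M (map (\<lambda>(u, A). (u + d, A)) xs)"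
  proof (rule set_eqI)
    fix \<eta>
    have "\<eta> \<in> theta d -` cyl M xs \<inter> Traj M \<longleftrightarrow> \<eta> \<in> Traj M \<and> (\<forall>(u, A) \<in> set xs. theta d \<eta> u \<in> A)"
      using theta_Traj[OF _ d(2)] unfolding cyl_def by blast
    also have "\<dots> \<longleftrightarrow> \<eta> \<in> cyl M (map (\<lambda>(u, A). (u + d, A)) xs)"
      unfolding key cyl_def by blast
    finally show "\<eta> \<in> theta d -` cyl M xs \<inter> Traj M \<longleftrightarrow> \<eta> \<in> cyl M (map (\<lambda>(u, A). (u + d, A)) xs)" .
  qed
  have v': "valid M (map (\<lambda>(u, A). (u + d, A)) xs)"
    unfolding valid_def ball_map_shift
  proof
    show "sorted (map fst (map (\<lambda>(u, A). (u + d, A)) xs))" using v sorted_shift[of xs d] by (simp add: valid_def)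
    show "\<forall>(u, A) \<in> set xs. 0 \<le> u + d \<and> A \<in> sets (Ed M)"
      using v d(2) unfolding valid_def by (auto simp: Ball_def split_paired_All)
  qed
  show "emeasure (PP (x, t)) (theta d -` cyl M xs \<inter> Traj M) = emeasure (PP (x, s)) (cyl M xs)"
    unfolding eq PP_cyl[OF tl zt v'] PP_cyl[OF tl zs v] by (rule fdd_theta[OF d(1)])
qed


lemma law_psi:
  assumes tl: "trajectory_laws M \<tau> PP" and lmp: "lmp M \<tau>" and x: "x \<in> space M" and t: "t \<in> {0..<1}" and s: "s \<in> {0..<1}"
    and d: "t = s + d" "0 < d" and B: "B \<in> sets (Gm M)"
  shows "emeasure (PP (x, s)) B = emeasure (PP (x, t)) (psi x s d -` B \<inter> Traj M)"
proof -
  have s0: "0 \<le> s" and sd: "s + d < 1" using s t d by auto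
  show ?thesis
  proof (rule law_transfer[OF PP_sets[OF tl] PP_sets[OF tl] psi_meas[OF x s0 d(2) sd] _ _ B])
    show zt: "(x, t) \<in> space (Emeas M)" and zs: "(x, s) \<in> space (Emeas M)" using x s t by (auto simp: space_Emeas)
    show "emeasure (PP (x, s)) (Traj M) \<noteq> \<infinity>" using PP_Traj[OF tl zs] by simp
    fix xs assume v: "valid M xs"
    define xs' where "xs' = map (\<lambda>(u, A). (u - d, A)) (filter (\<lambda>p. d \<le> fst p) xs)"
    define cond where "cond = (\<forall>(u, A) \<in> set xs. u < d \<longrightarrow> Some (x, s + u) \<in> A)"
    have key: "(\<forall>(u, A) \<in> set xs. psi x s d \<eta> u \<in> A) = (cond \<and> (\<forall>(u, A) \<in> set xs'. \<eta> u \<in> A))" for \<eta>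
    proof -
      have "(\<forall>(u, A) \<in> set xs. psi x s d \<eta> u \<in> A) = (\<forall>(u, A) \<in> set xs. if u < d then Some (x, s + u) \<in> A else \<eta> (u - d) \<in> A)"
      proof (rule ball_pairs_cong)
        fix u A assume "(u, A) \<in> set xs"
        then have "0 \<le> u" using v unfolding valid_def by fastforce
        then show "(psi x s d \<eta> u \<in> A) = (if u < d then Some (x, s + u) \<in> A else \<eta> (u - d) \<in> A)"
          by (simp add: psi_def)
      qed
      from this ball_split_psi show ?thesis unfolding cond_def xs'_def by (rule trans)
    qed
    have eq: "psi x s d -` cyl M xs \<inter> Traj M = (if cond then cyl M xs' else {})"
    proof (rule set_eqI)
      fix \<eta>
      have "\<eta> \<in> psi x s d -` cyl M xs \<inter> Traj M \<longleftrightarrow> \<eta> \<in> Traj M \<and> (\<forall>(u, A) \<in> set xs. psi x s d \<eta> u \<in> A)"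
        using psi_Traj[OF _ x s0 d(2) sd] unfolding cyl_def by blast
      also have "\<dots> \<longleftrightarrow> \<eta> \<in> Traj M \<and> cond \<and> (\<forall>(u, A) \<in> set xs'. \<eta> u \<in> A)"
        unfolding key ..
      also have "\<dots> \<longleftrightarrow> \<eta> \<in> (if cond then cyl M xs' else {})"
        unfolding cyl_def by auto
      finally show "\<eta> \<in> psi x s d -` cyl M xs \<inter> Traj M \<longleftrightarrow> \<eta> \<in> (if cond then cyl M xs' else {})" .
    qed
    have v': "valid M xs'"
      unfolding valid_def xs'_def ball_map_shift
    proof
      show "sorted (map fst (map (\<lambda>(u, A). (u - d, A)) (filter (\<lambda>p. d \<le> fst p) xs)))"
        using v sorted_shift'[of "filter (\<lambda>p. d \<le> fst p) xs" d] sorted_filter[of fst xs]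
        by (simp add: valid_def)
      show "\<forall>(u, A) \<in> set (filter (\<lambda>p. d \<le> fst p) xs). 0 \<le> u - d \<and> A \<in> sets (Ed M)"
        using v unfolding valid_def by (auto simp: Ball_def split_paired_All)
    qed
    have so: "sorted (map fst xs)" and xsA: "\<forall>(u, A) \<in> set xs. 0 \<le> u \<and> A \<in> sets (Ed M)"
      using v by (auto simp: valid_def)
    have "fdd M \<tau> (Some (x, s + 0)) 0 xs = (if cond then fdd M \<tau> (Some (x, s + d)) 0 xs' else 0)"
      unfolding cond_def xs'_def
      by (rule fdd_prefix[OF lmp x s0 d(2) sd so xsA]) (use d(2) in simp_all)
    then have F: "fdd M \<tau> (Some (x, s)) 0 xs = (if cond then fdd M \<tau> (Some (x, t)) 0 xs' else 0)"
      by (simp only: d(1) add_0_right)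
    show "emeasure (PP (x, t)) (psi x s d -` cyl M xs \<inter> Traj M) = emeasure (PP (x, s)) (cyl M xs)"
    proof (cases cond)
      case True
      have "emeasure (PP (x, t)) (cyl M xs') = fdd M \<tau> (Some (x, t)) 0 xs'" by (rule PP_cyl[OF tl zt v'])
      then show ?thesis unfolding eq PP_cyl[OF tl zs v] F using True by simp
    next
      case False
      then show ?thesis unfolding eq PP_cyl[OF tl zs v] F by simp
    qed
  qed
qed



lemma equiv_iff: "equiv A r \<longleftrightarrow> r \<subseteq> A \<times> A \<and> (\<forall>x\<in>A. (x, x) \<in> r) \<and> (\<forall>x y. (x, y) \<in> r \<longrightarrow> (y, x) \<in> r)
    \<and> (\<forall>x y z. (x, y) \<in> r \<longrightarrow> (y, z) \<in> r \<longrightarrow> (x, z) \<in> r)"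
  by (simp add: equiv_def refl_on_def sym_def trans_def)

lemma equiv_reflD: "equiv A r \<Longrightarrow> a \<in> A \<Longrightarrow> (a, a) \<in> r"
  unfolding equiv_iff by blast

lemma rel_d_refl:
  assumes "equiv (space (Emeas M)) S" and "v \<in> insert None (Some ` space (Emeas M))"
  shows "rel_d S v v"
proof (cases v)
  case None
  then show ?thesis by (simp add: rel_d_def)
next
  case (Some z)
  then have "z \<in> space (Emeas M)" using assms(2) by auto
  then have "(z, z) \<in> S" by (rule equiv_reflD[OF assms(1)])
  then show ?thesis using Some by (simp add: rel_d_def)
qed

lemma rel_d_mono: "R \<subseteq> S \<Longrightarrow> rel_d R a b \<Longrightarrow> rel_d S a b"
  unfolding rel_d_def by blast

lemma R_closed_mono:
  assumes RS: "R \<subseteq> S" and B: "R_closed M S B"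
  shows "R_closed M R B"
  unfolding R_closed_def
proof (intro ballI impI)
  fix \<omega> \<omega>' assume "\<omega> \<in> B" "\<omega>' \<in> Traj M" and rel: "\<forall>t\<ge>0. rel_d R (\<omega> t) (\<omega>' t)"
  have "\<forall>t\<ge>0. rel_d S (\<omega> t) (\<omega>' t)" using rel rel_d_mono[OF RS] by blast
  then show "\<omega>' \<in> B" using B \<open>\<omega> \<in> B\<close> \<open>\<omega>' \<in> Traj M\<close> unfolding R_closed_def by blast
qed
lemma theta_closed:
  assumes B: "R_closed M S B" and d: "0 \<le> d"
  shows "R_closed M S (theta d -` B \<inter> Traj M)"
  unfolding R_closed_def
proof (intro ballI impI)
  fix \<omega> \<omega>' assume \<omega>: "\<omega> \<in> theta d -` B \<inter> Traj M" and \<omega>': "\<omega>' \<in> Traj M"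
    and rel: "\<forall>t\<ge>0. rel_d S (\<omega> t) (\<omega>' t)"
  have "theta d \<omega>' \<in> B"
  proof (rule B[unfolded R_closed_def, rule_format])
    show "theta d \<omega> \<in> B" using \<omega> by simp
    show "theta d \<omega>' \<in> Traj M" by (rule theta_Traj[OF \<omega>' d])
    fix u :: real assume "0 \<le> u"
    then show "rel_d S (theta d \<omega> u) (theta d \<omega>' u)" using rel d by (simp add: theta_def)
  qed
  then show "\<omega>' \<in> theta d -` B \<inter> Traj M" using \<omega>' by simp
qed

lemma psi_closed:
  assumes eq: "equiv (space (Emeas M)) S" and B: "R_closed M S B"
    and x: "x \<in> space M" and s: "0 \<le> s" and d: "0 < d" and sd: "s + d < 1"
  shows "R_closed M S (psi x s d -` B \<inter> Traj M)"
  unfolding R_closed_def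
proof (intro ballI impI)
  fix \<omega> \<omega>' assume \<omega>: "\<omega> \<in> psi x s d -` B \<inter> Traj M" and \<omega>': "\<omega>' \<in> Traj M"
    and rel: "\<forall>t\<ge>0. rel_d S (\<omega> t) (\<omega>' t)"
  have "psi x s d \<omega>' \<in> B"
  proof (rule B[unfolded R_closed_def, rule_format])
    show "psi x s d \<omega> \<in> B" using \<omega> by simp
    show "psi x s d \<omega>' \<in> Traj M" by (rule psi_Traj[OF \<omega>' x s d sd])
    fix u :: real assume u: "0 \<le> u"
    show "rel_d S (psi x s d \<omega> u) (psi x s d \<omega>' u)"
    proof (cases "u < d")
      case True
      have "Some (x, s + u) \<in> insert None (Some ` space (Emeas M))"
        using x s u True sd by (auto simp: space_Emeas)
      then show ?thesis using rel_d_refl[OF eq] True u by (simp add: psi_def)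
    next
      case False
      then show ?thesis using rel u by (simp add: psi_def)
    qed
  qed
  then show "\<omega>' \<in> psi x s d -` B \<inter> Traj M" using \<omega>' by simp
qed

lemma psi_sub:
  assumes eq: "equiv (space (Emeas M)) S" and B: "R_closed M S B"
    and x: "x \<in> space M" and y: "y \<in> space M" and s: "0 \<le> s" and d: "0 < d" and sd: "s + d < 1"
    and xy: "\<And>u. 0 \<le> u \<Longrightarrow> u < d \<Longrightarrow> ((x, s + u), (y, s + u)) \<in> S"
  shows "psi x s d -` B \<inter> Traj M \<subseteq> psi y s d -` B \<inter> Traj M"
proof
  fix \<omega> assume \<omega>: "\<omega> \<in> psi x s d -` B \<inter> Traj M"
  then have \<omega>T: "\<omega> \<in> Traj M" by simp
  have "psi y s d \<omega> \<in> B"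
  proof (rule B[unfolded R_closed_def, rule_format])
    show "psi x s d \<omega> \<in> B" using \<omega> by simp
    show "psi y s d \<omega> \<in> Traj M" by (rule psi_Traj[OF \<omega>T y s d sd])
    fix u :: real assume u: "0 \<le> u"
    show "rel_d S (psi x s d \<omega> u) (psi y s d \<omega> u)"
    proof (cases "u < d")
      case True
      then show ?thesis using xy[OF u True] u by (simp add: psi_def rel_d_def)
    next
      case False
      then have "\<omega> (u - d) \<in> insert None (Some ` space (Emeas M))" using TrajD(1)[OF \<omega>T, of "u - d"] by simp
      then show ?thesis using rel_d_refl[OF eq] False u by (simp add: psi_def)
    qed
  qed
  then show "\<omega> \<in> psi y s d -` B \<inter> Traj M" using \<omega>T by simp
qed





lemma equiv_symD: "equiv A r \<Longrightarrow> (a, b) \<in> r \<Longrightarrow> (b, a) \<in> r"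
  unfolding equiv_iff by blast

lemma equiv_transD: "equiv A r \<Longrightarrow> (a, b) \<in> r \<Longrightarrow> (b, c) \<in> r \<Longrightarrow> (a, c) \<in> r"
  unfolding equiv_iff by blast

lemma equiv_subD: "equiv A r \<Longrightarrow> (a, b) \<in> r \<Longrightarrow> a \<in> A \<and> b \<in> A"
  unfolding equiv_iff by blast

lemma time_coherentD: "time_coherent S \<Longrightarrow> 0 \<le> (t::real) \<Longrightarrow> t < 1 \<Longrightarrow> ((x, t), (y, t)) \<in> S \<Longrightarrow> 0 \<le> s \<Longrightarrow> s < 1
   \<Longrightarrow> ((x, s), (y, s)) \<in> S"
  unfolding time_coherent_def by blast

theorem mainTheorem10:
  fixes M :: "'x measure" and \<tau> :: "'x \<Rightarrow> 'x measure" and lab :: "nat \<Rightarrow> 'x \<Rightarrow> bool"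
    and PP :: "'x \<times> real \<Rightarrow> (real \<Rightarrow> ('x \<times> real) option) measure"
    and R :: "(('x \<times> real) \<times> ('x \<times> real)) set"
  assumes "lmp M \<tau>"
    and "trajectory_laws M \<tau> PP"
    and "is_bisimulation M lab PP R"
  shows "is_bisimulation M lab PP (time_closure M R)"
proof -
  note lmp = assms(1) and tl = assms(2)
  define E where "E = space (Emeas M)"
  have E: "E = space M \<times> {0..<1}" unfolding E_def by (rule space_Emeas)
  define S where "S = time_closure M R"
  define Fam where "Fam = {S'. equiv E S' \<and> time_coherent S' \<and> R \<subseteq> S'}"
  have S_Fam: "S = \<Inter>Fam" unfolding S_def Fam_def time_closure_def E_def ..
  have eqR: "equiv E R" using assms(3) unfolding is_bisimulation_def E_def by blast
  have bisR: "lmp_obs lab z = lmp_obs lab w \<and>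
        (\<forall>B \<in> sets (Gm M). R_closed M R B \<longrightarrow> emeasure (PP z) B = emeasure (PP w) B)" if "(z, w) \<in> R" for z w
    using assms(3) that unfolding is_bisimulation_def by fast
  have FamD: "equiv E S'" "time_coherent S'" "R \<subseteq> S'" if "S' \<in> Fam" for S'
    using that unfolding Fam_def by auto
  have EE: "E \<times> E \<in> Fam"
    unfolding Fam_def
  proof (intro CollectI conjI)
    show "equiv E (E \<times> E)" unfolding equiv_iff by auto
    show "time_coherent (E \<times> E)" unfolding time_coherent_def E by auto
    show "R \<subseteq> E \<times> E" using eqR by (rule equiv_type)
  qed
  have S_le: "S \<subseteq> S'" if "S' \<in> Fam" for S' unfolding S_Fam using that by (rule Inter_lower)
  have S_I: "p \<in> S" if "\<And>S'. S' \<in> Fam \<Longrightarrow> p \<in> S'" for p unfolding S_Fam using that by (rule InterI)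
  have SEE: "S \<subseteq> E \<times> E" using S_le[OF EE] .
  have RS: "R \<subseteq> S" using FamD(3) S_I by blast
  have eqS: "equiv E S"
  proof (rule equivI)
    show "S \<subseteq> E \<times> E" by (rule SEE)
    show "refl_on E S"
    proof (rule refl_onI)
      fix z assume "z \<in> E"
      show "(z, z) \<in> S" by (rule S_I) (rule equiv_reflD[OF FamD(1) \<open>z \<in> E\<close>])
    qed
    show "sym S"
    proof (rule symI)
      fix z w assume zw: "(z, w) \<in> S"
      show "(w, z) \<in> S"
      proof (rule S_I)
        fix S' assume S': "S' \<in> Fam"
        show "(w, z) \<in> S'" using equiv_symD[OF FamD(1)[OF S'] subsetD[OF S_le[OF S'] zw]] .
      qed
    qed
    show "trans S"
    proof (rule transI)
      fix z w v assume zw: "(z, w) \<in> S" and wv: "(w, v) \<in> S"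
      show "(z, v) \<in> S"
      proof (rule S_I)
        fix S' assume S': "S' \<in> Fam"
        show "(z, v) \<in> S'"
          using equiv_transD[OF FamD(1)[OF S'] subsetD[OF S_le[OF S'] zw] subsetD[OF S_le[OF S'] wv]] .
      qed
    qed
  qed
  have tcS: "time_coherent S"
    unfolding time_coherent_def
  proof (intro allI impI)
    fix x y and t s :: real assume h: "0 \<le> t \<and> t < 1 \<and> ((x, t), y, t) \<in> S" and hs: "0 \<le> s \<and> s < 1"
    show "((x, s), y, s) \<in> S"
    proof (rule S_I)
      fix S' assume S': "S' \<in> Fam"
      have "((x, t), y, t) \<in> S'" using h S_le[OF S'] by blast
      then show "((x, s), y, s) \<in> S'" using time_coherentD[OF FamD(2)[OF S']] h hs by blast
    qed
  qed
  define T where "T = {(z, w) \<in> S. lmp_obs lab z = lmp_obs lab w \<and>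
        (\<forall>B \<in> sets (Gm M). R_closed M S B \<longrightarrow> emeasure (PP z) B = emeasure (PP w) B)}"
  have T_iff: "(z, w) \<in> T \<longleftrightarrow> (z, w) \<in> S \<and> lmp_obs lab z = lmp_obs lab w \<and>
        (\<forall>B \<in> sets (Gm M). R_closed M S B \<longrightarrow> emeasure (PP z) B = emeasure (PP w) B)" for z w
    unfolding T_def by simp
  have obs_fst: "lmp_obs lab (x, s) = lmp_obs lab (x, t)" for x s t
    by (simp add: lmp_obs_def)
  have T_Fam: "T \<in> Fam"
    unfolding Fam_def
  proof (intro CollectI conjI)
    show "equiv E T"
    proof (rule equivI)
      show "T \<subseteq> E \<times> E" using SEE unfolding T_def by blast
      show "refl_on E T"
      proof (rule refl_onI)
        fix z assume "z \<in> E"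
        then show "(z, z) \<in> T" unfolding T_iff using equiv_reflD[OF eqS] by blast
      qed
      show "sym T"
      proof (rule symI)
        fix z w assume "(z, w) \<in> T"
        then show "(w, z) \<in> T" unfolding T_iff using equiv_symD[OF eqS] by metis
      qed
      show "trans T"
      proof (rule transI)
        fix z w v assume "(z, w) \<in> T" "(w, v) \<in> T"
        then show "(z, v) \<in> T" unfolding T_iff using equiv_transD[OF eqS] by metis
      qed
    qed
    show "R \<subseteq> T"
    proof
      fix p assume p: "p \<in> R"
      obtain z w where zw: "p = (z, w)" by (cases p) simp
      have "(z, w) \<in> S" using p zw RS by auto
      moreover have "lmp_obs lab z = lmp_obs lab w" using bisR p zw by auto
      moreover have "\<forall>B \<in> sets (Gm M). R_closed M S B \<longrightarrow> emeasure (PP z) B = emeasure (PP w) B"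
        using bisR[of z w] p zw R_closed_mono[OF RS] by auto
      ultimately show "p \<in> T" unfolding zw T_iff by blast
    qed
    show "time_coherent T"
      unfolding time_coherent_def
    proof (intro allI impI)
      fix x y and t s :: real assume h: "0 \<le> t \<and> t < 1 \<and> ((x, t), y, t) \<in> T" and hs: "0 \<le> s \<and> s < 1"
      have hT0: "((x, t), y, t) \<in> T" using h by blast
      have hS: "((x, t), y, t) \<in> S" using hT0 unfolding T_iff by blast
      have xy: "x \<in> space M" "y \<in> space M" using subsetD[OF SEE hS] E by auto
      have hT: "emeasure (PP (x, t)) B = emeasure (PP (y, t)) B" if "B \<in> sets (Gm M)" "R_closed M S B" for B
        using hT0 that unfolding T_iff by blast
      have sS: "((x, s), y, s) \<in> S" using time_coherentD[OF tcS _ _ hS] h hs by blast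
      have obs: "lmp_obs lab (x, s) = lmp_obs lab (y, s)"
        using hT0 obs_fst[of x s t] obs_fst[of y s t] unfolding T_iff by simp
      have tI: "t \<in> {0..<1}" and sI: "s \<in> {0..<1}" using h hs by auto
      have "emeasure (PP (x, s)) B = emeasure (PP (y, s)) B" if B: "B \<in> sets (Gm M)" and Bc: "R_closed M S B" for B
      proof (cases "t \<le> s")
        case True
        define d where "d = s - t"
        have d: "s = t + d" "0 \<le> d" using True by (auto simp: d_def)
        define C where "C = theta d -` B \<inter> Traj M"
        have C: "C \<in> sets (Gm M)" unfolding C_def
          using measurable_sets[OF theta_meas[OF d(2)] B] by (simp add: space_Gm)
        have Cc: "R_closed M S C" unfolding C_def by (rule theta_closed[OF Bc d(2)])
        have "emeasure (PP (x, s)) B = emeasure (PP (x, t)) C"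
          unfolding C_def by (rule law_theta[OF tl xy(1) tI sI d B])
        also have "\<dots> = emeasure (PP (y, t)) C" by (rule hT[OF C Cc])
        also have "\<dots> = emeasure (PP (y, s)) B"
          unfolding C_def by (rule law_theta[OF tl xy(2) tI sI d B, symmetric])
        finally show ?thesis .
      next
        case False
        define d where "d = t - s"
        have d: "t = s + d" "0 < d" using False by (auto simp: d_def)
        have s0: "0 \<le> s" and sd: "s + d < 1" using hs h d by auto
        have rel1: "((x, s + u), (y, s + u)) \<in> S" if "0 \<le> u" "u < d" for u
          by (rule time_coherentD[OF tcS _ _ hS]) (use h that s0 sd in auto)
        have rel2: "((y, s + u), (x, s + u)) \<in> S" if "0 \<le> u" "u < d" for u
          using equiv_symD[OF eqS rel1[OF that]] .
        have eqS': "equiv (space (Emeas M)) S" using eqS unfolding E_def .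
        define C where "C = psi x s d -` B \<inter> Traj M"
        have CC: "C = psi y s d -` B \<inter> Traj M"
          unfolding C_def
          using psi_sub[OF eqS' Bc xy(1) xy(2) s0 d(2) sd rel1]
                psi_sub[OF eqS' Bc xy(2) xy(1) s0 d(2) sd rel2] by (rule subset_antisym)
        have C: "C \<in> sets (Gm M)" unfolding C_def
          using measurable_sets[OF psi_meas[OF xy(1) s0 d(2) sd] B] by (simp add: space_Gm)
        have Cc: "R_closed M S C" unfolding C_def by (rule psi_closed[OF eqS' Bc xy(1) s0 d(2) sd])
        have "emeasure (PP (x, s)) B = emeasure (PP (x, t)) C"
          unfolding C_def by (rule law_psi[OF tl lmp xy(1) tI sI d B])
        also have "\<dots> = emeasure (PP (y, t)) C" by (rule hT[OF C Cc])
        also have "\<dots> = emeasure (PP (y, s)) B"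
          unfolding CC by (rule law_psi[OF tl lmp xy(2) tI sI d B, symmetric])
        finally show ?thesis .
      qed
      then show "((x, s), y, s) \<in> T" using sS obs unfolding T_iff by blast
    qed
  qed
  have ST: "S \<subseteq> T" by (rule S_le[OF T_Fam])
  have "lmp_obs lab z = lmp_obs lab w \<and>
        (\<forall>B\<in>sets (Gm M). R_closed M S B \<longrightarrow> emeasure (PP z) B = emeasure (PP w) B)" if "(z, w) \<in> S" for z w
    using subsetD[OF ST that] unfolding T_iff by blast
  then show ?thesis
    unfolding is_bisimulation_def S_def[symmetric] E_def[symmetric] using eqS by blast
qed


end
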